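(* Let $h$ be a non-degenerate symmetric $(0,2)$-tensor field and $J_1,J_2$ $h$-symmetric $(1,1)$-tensor fields on a smooth manifold $M$, let $H_1,H_2:T^*M\to TM$ be bundle morphisms, and define $\hat J_i(X+\eta)=J_iX+H_i\eta+h(X)-J_i^*\eta$, $i=1,2$, on $TM\oplus T^*M$. Then $\hat J_1\hat J_2=-\hat J_2\hat J_1$ if and only if $J_1J_2+J_2J_1=-(H_1+H_2)h$, $J_1^*J_2^*+J_2^*J_1^*=-h(H_1+H_2)$, and $J_1H_2-H_2J_1^*=H_1J_2^*-J_2H_1$.
   Context: $h$ is viewed as the isomorphism $TM\to T^*M$, $X\mapsto h(X,\cdot)$; $(J^*\eta)(X)=\eta(JX)$; $J$ is $h$-symmetric if $h(JX,Y)=h(X,JY)$. Compositions such as $(H_1+H_2)h$ are compositions of bundle maps. *)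

theory Defs
  imports "HOL-Analysis.Analysis"
begin

text \<open>Fibrewise (pointwise) model: a fibre T_pM is a finite-dimensional real
vector space 'a; covectors are linear functionals 'a \<Rightarrow> real.\<close>

definition covec :: "('a::real_vector \<Rightarrow> real) \<Rightarrow> bool" where
  "covec \<eta> \<longleftrightarrow> linear \<eta>"

definition flat :: "('a \<Rightarrow> 'a \<Rightarrow> real) \<Rightarrow> 'a \<Rightarrow> ('a \<Rightarrow> real)" where
  "flat h X = (\<lambda>Y. h X Y)"

definition dualmap :: "('a \<Rightarrow> 'a) \<Rightarrow> ('a \<Rightarrow> real) \<Rightarrow> ('a \<Rightarrow> real)" where
  "dualmap J \<eta> = (\<lambda>X. \<eta> (J X))"

definition nondeg_sym :: "('a::real_vector \<Rightarrow> 'a \<Rightarrow> real) \<Rightarrow> bool" where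
  "nondeg_sym h \<longleftrightarrow> bilinear h \<and> (\<forall>X Y. h X Y = h Y X) \<and>
     (\<forall>X. (\<forall>Y. h X Y = 0) \<longrightarrow> X = 0)"

definition h_symmetric :: "('a::real_vector \<Rightarrow> 'a \<Rightarrow> real) \<Rightarrow> ('a \<Rightarrow> 'a) \<Rightarrow> bool" where
  "h_symmetric h J \<longleftrightarrow> linear J \<and> (\<forall>X Y. h (J X) Y = h X (J Y))"

definition cotan_morphism :: "(('a::real_vector \<Rightarrow> real) \<Rightarrow> 'a) \<Rightarrow> bool" where
  "cotan_morphism H \<longleftrightarrow> (\<forall>\<eta> \<zeta> a b. covec \<eta> \<longrightarrow> covec \<zeta> \<longrightarrow>
      H (\<lambda>X. a * \<eta> X + b * \<zeta> X) = a *\<^sub>R H \<eta> + b *\<^sub>R H \<zeta>)"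

definition genJ :: "('a::real_vector \<Rightarrow> 'a \<Rightarrow> real) \<Rightarrow> ('a \<Rightarrow> 'a) \<Rightarrow> (('a \<Rightarrow> real) \<Rightarrow> 'a)
    \<Rightarrow> 'a \<times> ('a \<Rightarrow> real) \<Rightarrow> 'a \<times> ('a \<Rightarrow> real)" where
  "genJ h J H p = (J (fst p) + H (snd p), (\<lambda>Y. flat h (fst p) Y - dualmap J (snd p) Y))"

end

theory Submission
  imports Defs
begin

lemma Hlin:
  assumes "cotan_morphism H" "covec f" "covec g"
  shows "H (\<lambda>Y. f Y - g Y) = H f - H g" "H (\<lambda>Y. - g Y) = - H g" "H (\<lambda>Y. 0) = 0"
proof -
  have "H (\<lambda>X. 1 * f X + (-1) * g X) = 1 *\<^sub>R H f + (-1) *\<^sub>R H g"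
    using assms unfolding cotan_morphism_def by blast
  then show "H (\<lambda>Y. f Y - g Y) = H f - H g" by simp
  have "H (\<lambda>X. 0 * f X + (-1) * g X) = 0 *\<^sub>R H f + (-1) *\<^sub>R H g"
    using assms unfolding cotan_morphism_def by blast
  then show "H (\<lambda>Y. - g Y) = - H g" by simp
  have "H (\<lambda>X. 0 * f X + 0 * g X) = 0 *\<^sub>R H f + 0 *\<^sub>R H g"
    using assms unfolding cotan_morphism_def by blast
  then show "H (\<lambda>Y. 0) = 0" by simp
qed

theorem proposition3p12:
  fixes h :: "'a::euclidean_space \<Rightarrow> 'a \<Rightarrow> real"
    and J1 J2 :: "'a \<Rightarrow> 'a"
    and H1 H2 :: "('a \<Rightarrow> real) \<Rightarrow> 'a"
  assumes "nondeg_sym h"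
    and "h_symmetric h J1" and "h_symmetric h J2"
    and "cotan_morphism H1" and "cotan_morphism H2"
  shows "(\<forall>X \<eta>. covec \<eta> \<longrightarrow>
            genJ h J1 H1 (genJ h J2 H2 (X, \<eta>)) = - genJ h J2 H2 (genJ h J1 H1 (X, \<eta>)))
     \<longleftrightarrow>
         (\<forall>X. J1 (J2 X) + J2 (J1 X) = - (H1 (flat h X) + H2 (flat h X)))
       \<and> (\<forall>\<eta>. covec \<eta> \<longrightarrow>
            (\<lambda>Y. dualmap J1 (dualmap J2 \<eta>) Y + dualmap J2 (dualmap J1 \<eta>) Y)
              = (\<lambda>Y. - (flat h (H1 \<eta>) Y + flat h (H2 \<eta>) Y)))
       \<and> (\<forall>\<eta>. covec \<eta> \<longrightarrow>
            J1 (H2 \<eta>) - H2 (dualmap J1 \<eta>) = H1 (dualmap J2 \<eta>) - J2 (H1 \<eta>))"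
proof -
  have bl: "bilinear h" and hs: "\<And>X Y. h X Y = h Y X"
    using assms(1) unfolding nondeg_sym_def by auto
  have lJ1: "linear J1" and sJ1: "\<And>X Y. h (J1 X) Y = h X (J1 Y)"
    using assms(2) unfolding h_symmetric_def by auto
  have lJ2: "linear J2" and sJ2: "\<And>X Y. h (J2 X) Y = h X (J2 Y)"
    using assms(3) unfolding h_symmetric_def by auto
  have lY: "\<And>Y. linear (\<lambda>x. h x Y)" using bl unfolding bilinear_def by auto
  have hadd: "\<And>a b Y. h (a + b) Y = h a Y + h b Y"
    using linear_add[OF lY] by simp
  have hzero: "\<And>Y. h 0 Y = 0"
    using linear_0[OF lY] by simp
  have cflat: "\<And>X. covec (flat h X)"
    using bl unfolding bilinear_def covec_def flat_def by auto
  have cdual1: "\<And>\<eta>. covec \<eta> \<Longrightarrow> covec (dualmap J1 \<eta>)"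
    unfolding covec_def dualmap_def using linear_compose[OF lJ1]
    by (simp add: comp_def)
  have cdual2: "\<And>\<eta>. covec \<eta> \<Longrightarrow> covec (dualmap J2 \<eta>)"
    unfolding covec_def dualmap_def using linear_compose[OF lJ2]
    by (simp add: comp_def)
  have c0: "covec (\<lambda>Y::'a. 0::real)" unfolding covec_def by (simp add: linear_zero)
  have flat0: "flat h 0 = (\<lambda>Y. 0)" unfolding flat_def using hzero by auto
  define A where "A X \<eta> = J1 (J2 X) + J2 (J1 X) + H1 (flat h X) + H2 (flat h X)
     + (J1 (H2 \<eta>) - H2 (dualmap J1 \<eta>) - H1 (dualmap J2 \<eta>) + J2 (H1 \<eta>))" for X \<eta>
  define B where "B \<eta> = (\<lambda>Y. h (H1 \<eta>) Y + h (H2 \<eta>) Y + \<eta> (J2 (J1 Y)) + \<eta> (J1 (J2 Y)))" for \<eta>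
  have key: "genJ h J1 H1 (genJ h J2 H2 (X, \<eta>)) = - genJ h J2 H2 (genJ h J1 H1 (X, \<eta>))
     \<longleftrightarrow> A X \<eta> = 0 \<and> B \<eta> = (\<lambda>Y. 0)" if "covec \<eta>" for X \<eta>
  proof -
    have e1: "H1 (\<lambda>Y. flat h X Y - dualmap J2 \<eta> Y) = H1 (flat h X) - H1 (dualmap J2 \<eta>)"
      using Hlin(1)[OF assms(4) cflat cdual2[OF that]] .
    have e2: "H2 (\<lambda>Y. flat h X Y - dualmap J1 \<eta> Y) = H2 (flat h X) - H2 (dualmap J1 \<eta>)"
      using Hlin(1)[OF assms(5) cflat cdual1[OF that]] .
    have f: "fst (genJ h J1 H1 (genJ h J2 H2 (X, \<eta>))) + fst (genJ h J2 H2 (genJ h J1 H1 (X, \<eta>))) = A X \<eta>"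
      unfolding genJ_def A_def fst_conv snd_conv e1 e2
      by (simp add: linear_add[OF lJ1] linear_add[OF lJ2] linear_diff[OF lJ1] linear_diff[OF lJ2] algebra_simps)
    have s: "(\<lambda>Y. snd (genJ h J1 H1 (genJ h J2 H2 (X, \<eta>))) Y + snd (genJ h J2 H2 (genJ h J1 H1 (X, \<eta>))) Y) = B \<eta>"
      unfolding genJ_def B_def flat_def dualmap_def by (simp add: hadd sJ1 sJ2 algebra_simps)
    show ?thesis
    proof
      assume L: "genJ h J1 H1 (genJ h J2 H2 (X, \<eta>)) = - genJ h J2 H2 (genJ h J1 H1 (X, \<eta>))"
      have "fst (genJ h J1 H1 (genJ h J2 H2 (X, \<eta>))) = - fst (genJ h J2 H2 (genJ h J1 H1 (X, \<eta>)))"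
        using L by simp
      then have 1: "A X \<eta> = 0" using f by (simp add: eq_neg_iff_add_eq_0)
      have "B \<eta> Y = 0" for Y
      proof -
        have "snd (genJ h J1 H1 (genJ h J2 H2 (X, \<eta>))) Y = - snd (genJ h J2 H2 (genJ h J1 H1 (X, \<eta>))) Y"
          using L by simp
        then show ?thesis using fun_cong[OF s, of Y] by (simp add: eq_neg_iff_add_eq_0)
      qed
      then show "A X \<eta> = 0 \<and> B \<eta> = (\<lambda>Y. 0)" using 1 by auto
    next
      assume R: "A X \<eta> = 0 \<and> B \<eta> = (\<lambda>Y. 0)"
      show "genJ h J1 H1 (genJ h J2 H2 (X, \<eta>)) = - genJ h J2 H2 (genJ h J1 H1 (X, \<eta>))"
      proof (rule prod_eqI)
        show "fst (genJ h J1 H1 (genJ h J2 H2 (X, \<eta>))) = fst (- genJ h J2 H2 (genJ h J1 H1 (X, \<eta>)))"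
          using f R by (simp add: eq_neg_iff_add_eq_0)
        show "snd (genJ h J1 H1 (genJ h J2 H2 (X, \<eta>))) = snd (- genJ h J2 H2 (genJ h J1 H1 (X, \<eta>)))"
        proof
          fix Y
          have "B \<eta> Y = 0" using R by simp
          then show "snd (genJ h J1 H1 (genJ h J2 H2 (X, \<eta>))) Y = snd (- genJ h J2 H2 (genJ h J1 H1 (X, \<eta>))) Y"
            using fun_cong[OF s, of Y] by (simp add: eq_neg_iff_add_eq_0)
        qed
      qed
    qed
  qed
  have A0: "A X (\<lambda>Y. 0) = J1 (J2 X) + J2 (J1 X) + H1 (flat h X) + H2 (flat h X)" for X
    unfolding A_def dualmap_def using Hlin(3)[OF assms(4) c0 c0] Hlin(3)[OF assms(5) c0 c0]
    by (simp add: linear_0[OF lJ1] linear_0[OF lJ2])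
  have AX0: "A 0 \<eta> = J1 (H2 \<eta>) - H2 (dualmap J1 \<eta>) - H1 (dualmap J2 \<eta>) + J2 (H1 \<eta>)" for \<eta>
    unfolding A_def flat0 using Hlin(3)[OF assms(4) c0 c0] Hlin(3)[OF assms(5) c0 c0]
    by (simp add: linear_0[OF lJ1] linear_0[OF lJ2])
  have Asplit: "A X \<eta> = A X (\<lambda>Y. 0) + A 0 \<eta>" for X \<eta>
    unfolding A0 AX0 by (simp add: A_def)
  have c1: "(\<forall>X. J1 (J2 X) + J2 (J1 X) = - (H1 (flat h X) + H2 (flat h X))) \<longleftrightarrow> (\<forall>X. A X (\<lambda>Y. 0) = 0)"
    unfolding A0 by (simp only: eq_neg_iff_add_eq_0 add.assoc)
  have c3: "(J1 (H2 \<eta>) - H2 (dualmap J1 \<eta>) = H1 (dualmap J2 \<eta>) - J2 (H1 \<eta>)) \<longleftrightarrow> A 0 \<eta> = 0" for \<eta>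
    unfolding AX0 by (auto simp: algebra_simps)
  have c2: "((\<lambda>Y. dualmap J1 (dualmap J2 \<eta>) Y + dualmap J2 (dualmap J1 \<eta>) Y)
              = (\<lambda>Y. - (flat h (H1 \<eta>) Y + flat h (H2 \<eta>) Y))) \<longleftrightarrow> B \<eta> = (\<lambda>Y. 0)" for \<eta>
    unfolding B_def dualmap_def flat_def fun_eq_iff by (smt (verit))
  have Bsimp: "B (\<lambda>Y. 0) = (\<lambda>Y. 0)"
    unfolding B_def using Hlin(3)[OF assms(4) c0 c0] Hlin(3)[OF assms(5) c0 c0] hzero by simp
  show ?thesis
    unfolding c1 c2 c3
  proof
    assume L: "\<forall>X \<eta>. covec \<eta> \<longrightarrow> genJ h J1 H1 (genJ h J2 H2 (X, \<eta>)) = - genJ h J2 H2 (genJ h J1 H1 (X, \<eta>))"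
    then have K: "\<And>X \<eta>. covec \<eta> \<Longrightarrow> A X \<eta> = 0 \<and> B \<eta> = (\<lambda>Y. 0)" using key by blast
    show "(\<forall>X. A X (\<lambda>Y. 0) = 0) \<and> (\<forall>\<eta>. covec \<eta> \<longrightarrow> B \<eta> = (\<lambda>Y. 0)) \<and> (\<forall>\<eta>. covec \<eta> \<longrightarrow> A 0 \<eta> = 0)"
      using K c0 by blast
  next
    assume R: "(\<forall>X. A X (\<lambda>Y. 0) = 0) \<and> (\<forall>\<eta>. covec \<eta> \<longrightarrow> B \<eta> = (\<lambda>Y. 0)) \<and> (\<forall>\<eta>. covec \<eta> \<longrightarrow> A 0 \<eta> = 0)"
    show "\<forall>X (\<eta>::'a\<Rightarrow>real). covec \<eta> \<longrightarrow> genJ h J1 H1 (genJ h J2 H2 (X, \<eta>)) = - genJ h J2 H2 (genJ h J1 H1 (X, \<eta>))"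
    proof (intro allI impI)
      fix X :: 'a and \<eta> :: "'a \<Rightarrow> real" assume c: "covec \<eta>"
      have "A X \<eta> = 0" using R c Asplit[of X \<eta>] by simp
      then show "genJ h J1 H1 (genJ h J2 H2 (X, \<eta>)) = - genJ h J2 H2 (genJ h J1 H1 (X, \<eta>))"
        using key[OF c] R c by blast
    qed
  qed
qed

end
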